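(* Let $d\ge1$, $n\in\mathbb{N}$, and let $R(n)$ be the range of $n$ steps of simple symmetric random walk on $\mathbb{Z}^d$ started at $0$. Then $$H(R(n))\ge -\log\Big(1-\frac{1}{2d}\Big)\cdot \mathbb{E}\big[|\partial R(n)|-1\big].$$
   Context: $H(X)=\mathbb{E}[-\log p(X)]$ with $p(x)=\Pr[X=x]$, logarithms base $2$. The inner boundary of $A\subset\mathbb{Z}^d$ is $\partial A=\{z\in A : z \text{ is at graph distance } 1 \text{ from some vertex of } \mathbb{Z}^d\setminus A\}$. The range is $R(n)=\{S(0),\ldots,S(n)\}$. *)

theory Defs
  imports "HOL-Probability.Probability" "HOL-Library.Function_Algebras"
begin

text \<open>Points of Z^d are represented as functions nat => int vanishing outside {..<d}.\<close>

definition lattice :: "nat \<Rightarrow> (nat \<Rightarrow> int) set" where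
  "lattice d = {x. \<forall>i\<ge>d. x i = 0}"

definition adjacent :: "nat \<Rightarrow> (nat \<Rightarrow> int) \<Rightarrow> (nat \<Rightarrow> int) \<Rightarrow> bool" where
  "adjacent d x y \<longleftrightarrow> x \<in> lattice d \<and> y \<in> lattice d \<and> (\<Sum>i<d. \<bar>x i - y i\<bar>) = 1"

definition inner_boundary :: "nat \<Rightarrow> (nat \<Rightarrow> int) set \<Rightarrow> (nat \<Rightarrow> int) set" where
  "inner_boundary d A = {z \<in> A. \<exists>y \<in> lattice d - A. adjacent d z y}"

definition unit_vec :: "nat \<Rightarrow> nat \<Rightarrow> int" where
  "unit_vec i = (\<lambda>j. if j = i then 1 else 0)"

definition steps :: "nat \<Rightarrow> (nat \<Rightarrow> int) set" where
  "steps d = {unit_vec i | i. i < d} \<union> {- unit_vec i | i. i < d}"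

text \<open>All step sequences of length n; the simple symmetric random walk of n steps
  is the uniform distribution on them (i.i.d. uniform steps).\<close>
definition walk_paths :: "nat \<Rightarrow> nat \<Rightarrow> (nat \<Rightarrow> int) list set" where
  "walk_paths d n = {xs. length xs = n \<and> set xs \<subseteq> steps d}"

definition walk :: "nat \<Rightarrow> nat \<Rightarrow> (nat \<Rightarrow> int) list pmf" where
  "walk d n = pmf_of_set (walk_paths d n)"

definition pos :: "(nat \<Rightarrow> int) list \<Rightarrow> nat \<Rightarrow> nat \<Rightarrow> int" where
  "pos xs k = sum_list (take k xs)"

definition walk_range :: "(nat \<Rightarrow> int) list \<Rightarrow> (nat \<Rightarrow> int) set" where
  "walk_range xs = pos xs ` {0..length xs}"

definition entropy2 :: "'a pmf \<Rightarrow> real" where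
  "entropy2 p = (\<Sum>x\<in>set_pmf p. - pmf p x * log 2 (pmf p x))"

end

theory Submission imports Defs begin

declare plus_fun_apply [simp del]

type_synonym pt = "nat \<Rightarrow> int"

fun rng :: "pt \<Rightarrow> pt list \<Rightarrow> pt set" where
  "rng x [] = {x}" | "rng x (s#ys) = insert x (rng (x+s) ys)"
fun vis :: "pt \<Rightarrow> pt list \<Rightarrow> pt set" where
  "vis x [] = {}" | "vis x (s#ys) = insert x (vis (x+s) ys)"
definition deg :: "nat \<Rightarrow> pt set \<Rightarrow> pt \<Rightarrow> nat" where
  "deg d A x = card {s \<in> steps d. x + s \<in> A}"
fun prodd :: "nat \<Rightarrow> pt set \<Rightarrow> pt \<Rightarrow> pt list \<Rightarrow> real" where
  "prodd d A x [] = 1" | "prodd d A x (s#ys) = real (deg d A x) * prodd d A (x+s) ys"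
fun bc :: "pt set \<Rightarrow> pt \<Rightarrow> pt list \<Rightarrow> nat" where
  "bc B x [] = 0" | "bc B x (s#ys) = (if x \<in> B then 1 else 0) + bc B (x+s) ys"

lemma rng_pos: "(\<lambda>k. x + sum_list (take k xs)) ` {0..length xs} = rng x xs"
proof (induction xs arbitrary: x)
  case Nil then show ?case by (simp add: fun_eq_iff plus_fun_apply)
next
  case (Cons s ys)
  have e: "{0..length (s#ys)} = insert 0 (Suc ` {0..length ys})"
    by (auto simp: image_iff)
  have "(\<lambda>k. x + sum_list (take k (s#ys))) ` (Suc ` {0..length ys})
      = (\<lambda>k. (x+s) + sum_list (take k ys)) ` {0..length ys}"
    unfolding image_image by (simp add: add.assoc)
  then show ?case unfolding e image_insert using Cons[of "x+s"] by simp
qed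

lemma walk_range_rng: "walk_range xs = rng 0 xs"
  using rng_pos[of 0 xs] by (simp add: walk_range_def pos_def)

lemma rng_eq: "rng x xs = insert (x + sum_list xs) (vis x xs)"
  by (induction xs arbitrary: x) (auto simp: add.assoc)

lemma x_in_rng: "x \<in> rng x xs" by (cases xs) auto

lemma finite_vis: "finite (vis x xs)"
  by (induction xs arbitrary: x) auto

lemma bc_card: "card (B \<inter> vis x xs) \<le> bc B x xs"
proof (induction xs arbitrary: x)
  case Nil then show ?case by simp
next
  case (Cons s ys)
  have f: "finite (B \<inter> vis (x+s) ys)" using finite_vis by auto
  show ?case
  proof (cases "x \<in> B")
    case True
    have "B \<inter> vis x (s#ys) = insert x (B \<inter> vis (x+s) ys)" using True by auto
    then have "card (B \<inter> vis x (s#ys)) \<le> Suc (card (B \<inter> vis (x+s) ys))"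
      using card_insert_le_m1 f by (metis card_insert_if le_SucI order_refl)
    moreover have "bc B x (s#ys) = 1 + bc B (x+s) ys" using True by simp
    ultimately show ?thesis using Cons[of "x+s"] by linarith
  next
    case False
    have "B \<inter> vis x (s#ys) = B \<inter> vis (x+s) ys" using False by auto
    then show ?thesis using Cons[of "x+s"] False by simp
  qed
qed

lemma steps_eq: "steps d = (unit_vec ` {..<d}) \<union> ((\<lambda>i. - unit_vec i) ` {..<d})"
  unfolding steps_def by auto

lemma finite_steps: "finite (steps d)" by (simp add: steps_eq)

lemma card_steps_le: "card (steps d) \<le> 2 * d"
proof -
  have "card (steps d) \<le> card (unit_vec ` {..<d}) + card ((\<lambda>i. - unit_vec i) ` {..<d})"
    unfolding steps_eq by (rule card_Un_le)
  also have "\<dots> \<le> d + d" by (intro add_mono) (metis card_image_le card_lessThan finite_lessThan)+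
  finally show ?thesis by simp
qed

lemma card_steps_ge: assumes "d \<ge> 1" shows "card (steps d) \<ge> 2"
proof -
  have ne: "unit_vec 0 \<noteq> - unit_vec 0"
  proof
    assume "unit_vec 0 = - unit_vec 0"
    then have "unit_vec 0 0 = (- unit_vec 0) 0" by (rule fun_cong)
    then show False by (simp add: unit_vec_def)
  qed
  have "{unit_vec 0, - unit_vec 0} \<subseteq> steps d" using assms unfolding steps_def by auto
  then have "card {unit_vec 0, - unit_vec 0} \<le> card (steps d)"
    by (rule card_mono[OF finite_steps])
  then show ?thesis using ne by simp
qed

lemma adjacent_step:
  assumes "adjacent d x y" shows "y - x \<in> steps d"
proof -
  have L: "x \<in> lattice d" "y \<in> lattice d" and S: "(\<Sum>i<d. \<bar>x i - y i\<bar>) = 1"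
    using assms by (auto simp: adjacent_def)
  obtain i where i: "i < d" "x i \<noteq> y i"
  proof (rule ccontr)
    assume "\<not> thesis"
    then have "\<forall>i<d. x i = y i" using that by blast
    then have "(\<Sum>i<d. \<bar>x i - y i\<bar>) = 0" by simp
    with S show False by simp
  qed
  have split: "(\<Sum>i<d. \<bar>x i - y i\<bar>) = \<bar>x i - y i\<bar> + (\<Sum>j\<in>{..<d}-{i}. \<bar>x j - y j\<bar>)"
    using i by (simp add: sum.remove)
  have nn: "(\<Sum>j\<in>{..<d}-{i}. \<bar>x j - y j\<bar>) \<ge> 0" by (simp add: sum_nonneg)
  have "\<bar>x i - y i\<bar> \<ge> 1" using i by auto
  then have a1: "\<bar>x i - y i\<bar> = 1" and r0: "(\<Sum>j\<in>{..<d}-{i}. \<bar>x j - y j\<bar>) = 0"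
    using split S nn by linarith+
  have oth: "\<forall>j\<in>{..<d}-{i}. \<bar>x j - y j\<bar> = 0"
    using r0 sum_nonneg_eq_0_iff[of "{..<d}-{i}" "\<lambda>j. \<bar>x j - y j\<bar>"] by auto
  have out: "\<And>j. j \<ge> d \<Longrightarrow> x j = 0 \<and> y j = 0" using L by (auto simp: lattice_def)
  show ?thesis
  proof (cases "y i - x i = 1")
    case True
    have "y - x = unit_vec i"
    proof
      fix j show "(y - x) j = unit_vec i j"
        using True oth out[of j] by (cases "j < d") (auto simp: unit_vec_def)
    qed
    then show ?thesis using i unfolding steps_def by auto
  next
    case False
    then have "y i - x i = -1" using a1 by auto
    then have "y - x = - unit_vec i"
    proof -
      assume h: "y i - x i = -1"
      show ?thesis
      proof
        fix j show "(y - x) j = (- unit_vec i) j"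
          using h oth out[of j] by (cases "j < d") (auto simp: unit_vec_def)
      qed
    qed
    then show ?thesis using i unfolding steps_def by auto
  qed
qed

lemma wp_Suc: "walk_paths d (Suc n) = (\<lambda>(s,ys). s#ys) ` (steps d \<times> walk_paths d n)"
  unfolding walk_paths_def by (auto simp: image_iff length_Suc_conv)

lemma finite_wp: "finite (walk_paths d n)"
proof -
  have "walk_paths d n = {xs. set xs \<subseteq> steps d \<and> length xs = n}" by (auto simp: walk_paths_def)
  then show ?thesis using finite_lists_length_eq[OF finite_steps] by simp
qed

lemma deg_sum: "(\<Sum>s\<in>steps d. if x + s \<in> A then 1 / real (deg d A x) else 0) \<le> 1"
proof -
  have "(\<Sum>s\<in>steps d. if x + s \<in> A then 1 / real (deg d A x) else 0)
     = (\<Sum>s\<in>{s \<in> steps d. x + s \<in> A}. 1 / real (deg d A x))"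
    by (simp add: sum.inter_filter[OF finite_steps, symmetric])
  also have "\<dots> = real (deg d A x) * (1 / real (deg d A x))" by (simp add: deg_def)
  also have "\<dots> \<le> 1" by (cases "deg d A x = 0") auto
  finally show ?thesis .
qed

lemma prodd_nonneg: "prodd d A x xs \<ge> 0"
  by (induction xs arbitrary: x) auto

lemma wsum: "(\<Sum>xs\<in>walk_paths d n. if rng x xs \<subseteq> A then 1 / prodd d A x xs else 0) \<le> 1"
proof (induction n arbitrary: x)
  case 0
  have "walk_paths d 0 = {[]}" by (auto simp: walk_paths_def)
  then show ?case by (simp only:) simp
next
  case (Suc n)
  let ?f = "\<lambda>x xs. if rng x xs \<subseteq> A then 1 / prodd d A x xs else 0"
  have inj: "inj_on (\<lambda>(s,ys). s#ys) (steps d \<times> walk_paths d n)"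
    by (auto simp: inj_on_def)
  have "(\<Sum>xs\<in>walk_paths d (Suc n). ?f x xs) = (\<Sum>(s,ys)\<in>steps d \<times> walk_paths d n. ?f x (s#ys))"
    unfolding wp_Suc by (subst sum.reindex[OF inj]) (simp add: case_prod_unfold)
  also have "\<dots> = (\<Sum>s\<in>steps d. \<Sum>ys\<in>walk_paths d n. ?f x (s#ys))"
    by (rule sum.cartesian_product[symmetric])
  also have "\<dots> \<le> (\<Sum>s\<in>steps d. if x + s \<in> A then 1 / real (deg d A x) else 0)"
  proof (rule sum_mono)
    fix s assume "s \<in> steps d"
    show "(\<Sum>ys\<in>walk_paths d n. ?f x (s#ys)) \<le> (if x + s \<in> A then 1 / real (deg d A x) else 0)"
    proof (cases "x \<in> A \<and> x + s \<in> A")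
      case True
      have "(\<Sum>ys\<in>walk_paths d n. ?f x (s#ys)) = (\<Sum>ys\<in>walk_paths d n. (1 / real (deg d A x)) * ?f (x+s) ys)"
        using True by (intro sum.cong) auto
      also have "\<dots> = (1 / real (deg d A x)) * (\<Sum>ys\<in>walk_paths d n. ?f (x+s) ys)"
        by (rule sum_distrib_left[symmetric])
      also have "\<dots> \<le> (1 / real (deg d A x)) * 1"
        by (rule mult_left_mono[OF Suc]) simp
      finally show ?thesis using True by simp
    next
      case False
      have "\<And>ys. ?f x (s#ys) = 0" using False x_in_rng[of "x+s"] by auto
      then show ?thesis by simp
    qed
  qed
  also have "\<dots> \<le> 1" by (rule deg_sum)
  finally show ?case .
qed

lemma deg_pos: assumes "s \<in> steps d" "x + s \<in> A" shows "deg d A x \<ge> 1"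
proof -
  have "finite {s \<in> steps d. x + s \<in> A}" using finite_steps by simp
  moreover have "s \<in> {s \<in> steps d. x + s \<in> A}" using assms by simp
  ultimately show ?thesis unfolding deg_def
    by (metis One_nat_def Suc_leI card_gt_0_iff empty_iff)
qed

lemma deg_le: "deg d A x \<le> card (steps d)"
  unfolding deg_def by (rule card_mono[OF finite_steps]) auto

lemma deg_bd: assumes "x \<in> inner_boundary d A" shows "deg d A x + 1 \<le> card (steps d)"
proof -
  obtain y where y: "y \<in> lattice d - A" "adjacent d x y"
    using assms by (auto simp: inner_boundary_def)
  have st: "y - x \<in> steps d" by (rule adjacent_step[OF y(2)])
  have "x + (y - x) = y" by simp
  then have "{s \<in> steps d. x + s \<in> A} \<subseteq> steps d - {y - x}" using y(1) by auto
  then have "deg d A x \<le> card (steps d - {y - x})"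
    unfolding deg_def by (intro card_mono) (simp_all add: finite_steps)
  also have "\<dots> = card (steps d) - 1" using st finite_steps by simp
  finally show ?thesis using st finite_steps
    by (metis Suc_eq_plus1 Suc_leI card_gt_0_iff empty_iff le_diff_conv2 less_imp_le_nat
        One_nat_def le_add_diff_inverse le_refl)
qed

lemma prodd_bd:
  fixes m q :: real
  assumes m: "m = real (card (steps d))" and q: "q = (m - 1) / m" and m1: "m \<ge> 1"
  shows "set xs \<subseteq> steps d \<Longrightarrow> rng x xs \<subseteq> A \<Longrightarrow>
     prodd d A x xs > 0 \<and> prodd d A x xs \<le> m ^ length xs * q ^ bc (inner_boundary d A) x xs"
proof (induction xs arbitrary: x)
  case Nil then show ?case by simp
next
  case (Cons s ys)
  have s: "s \<in> steps d" "set ys \<subseteq> steps d" using Cons.prems by auto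
  have r: "rng (x+s) ys \<subseteq> A" "x + s \<in> A" using Cons.prems x_in_rng[of "x+s" ys] by auto
  note IH = Cons.IH[OF s(2) r(1)]
  have dp: "deg d A x \<ge> 1" using deg_pos[OF s(1) r(2)] .
  have q0: "q \<ge> 0" using q m1 by simp
  let ?c = "if x \<in> inner_boundary d A then q else 1"
  have dc: "real (deg d A x) \<le> m * ?c"
  proof (cases "x \<in> inner_boundary d A")
    case True
    have "real (deg d A x) \<le> m - 1" using deg_bd[OF True] m by simp
    then show ?thesis using True q m1 by simp
  next
    case False then show ?thesis using deg_le[of d A x] m by simp
  qed
  have "prodd d A x (s#ys) = real (deg d A x) * prodd d A (x+s) ys" by simp
  also have "\<dots> \<le> (m * ?c) * (m ^ length ys * q ^ bc (inner_boundary d A) (x+s) ys)"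
    by (rule mult_mono[OF dc]) (use IH m1 q0 in auto)
  also have "\<dots> = m ^ length (s#ys) * q ^ bc (inner_boundary d A) x (s#ys)"
    by (simp add: power_add)
  finally show ?case using IH dp by simp
qed

lemma card_wp: "card (walk_paths d n) = card (steps d) ^ n"
proof -
  have "walk_paths d n = {xs. set xs \<subseteq> steps d \<and> length xs = n}" by (auto simp: walk_paths_def)
  then show ?thesis using card_lists_length_eq[OF finite_steps] by simp
qed

lemma wp_ne: assumes "d \<ge> 1" shows "walk_paths d n \<noteq> {}"
proof -
  have "replicate n (unit_vec 0) \<in> walk_paths d n" if "d > 0"
    using that by (auto simp: walk_paths_def steps_def)
  then show ?thesis using assms by auto
qed

lemma count_bd:
  fixes m q :: real
  assumes d: "d \<ge> 1" and m: "m = real (card (steps d))" and q: "q = (m - 1) / m"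
  shows "real (card {xs \<in> walk_paths d n. rng 0 xs = A}) \<le> m ^ n * q ^ (card (inner_boundary d A) - 1)"
proof -
  let ?S = "{xs \<in> walk_paths d n. rng 0 xs = A}"
  let ?k = "card (inner_boundary d A) - 1"
  have m2: "m \<ge> 2" using card_steps_ge[OF d] m by simp
  have q0: "q > 0" and q1: "q \<le> 1" using m2 q by auto
  have M: "m ^ n * q ^ ?k > 0" using m2 q0 by simp
  have key: "1 / (m ^ n * q ^ ?k) \<le> 1 / prodd d A 0 xs" if xs: "xs \<in> ?S" for xs
  proof -
    have st: "set xs \<subseteq> steps d" and ln: "length xs = n" and ra: "rng 0 xs = A"
      using xs by (auto simp: walk_paths_def)
    have P: "prodd d A 0 xs > 0" "prodd d A 0 xs \<le> m ^ n * q ^ bc (inner_boundary d A) 0 xs"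
      using prodd_bd[OF m q, where x=0 and xs=xs and A=A] m2 st ra ln by auto
    have sub: "inner_boundary d A \<subseteq> insert (0 + sum_list xs) (inner_boundary d A \<inter> vis 0 xs)"
      using ra rng_eq[of 0 xs] by (auto simp: inner_boundary_def)
    have "card (inner_boundary d A) \<le> card (insert (0 + sum_list xs) (inner_boundary d A \<inter> vis 0 xs))"
      by (rule card_mono[OF _ sub]) (simp add: finite_vis)
    also have "\<dots> \<le> Suc (card (inner_boundary d A \<inter> vis 0 xs))"
      by (simp add: card_insert_if finite_vis)
    finally have "?k \<le> bc (inner_boundary d A) 0 xs" using bc_card[of "inner_boundary d A" 0 xs] by linarith
    then have "q ^ bc (inner_boundary d A) 0 xs \<le> q ^ ?k" by (rule power_decreasing[OF _ less_imp_le[OF q0] q1])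
    then have "prodd d A 0 xs \<le> m ^ n * q ^ ?k" using P(2) m2 by (smt (verit) mult_left_mono zero_le_power)
    then show ?thesis using P(1) by (simp add: frac_le)
  qed
  have "real (card ?S) * (1 / (m ^ n * q ^ ?k)) = (\<Sum>xs\<in>?S. 1 / (m ^ n * q ^ ?k))" by simp
  also have "\<dots> \<le> (\<Sum>xs\<in>?S. 1 / prodd d A 0 xs)" by (rule sum_mono[OF key])
  also have "\<dots> = (\<Sum>xs\<in>walk_paths d n. if rng 0 xs = A then 1 / prodd d A 0 xs else 0)"
    by (simp add: sum.inter_filter[OF finite_wp])
  also have "\<dots> \<le> (\<Sum>xs\<in>walk_paths d n. if rng 0 xs \<subseteq> A then 1 / prodd d A 0 xs else 0)"
    by (rule sum_mono) (auto simp: prodd_nonneg)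
  also have "\<dots> \<le> 1" by (rule wsum)
  finally show ?thesis using M by (simp add: field_simps)
qed

theorem mainTheorem3:
  fixes d n :: nat
  assumes "d \<ge> 1"
  shows "entropy2 (map_pmf walk_range (walk d n)) \<ge>
         - log 2 (1 - 1 / (2 * real d)) *
           measure_pmf.expectation (walk d n)
             (\<lambda>xs. real (card (inner_boundary d (walk_range xs))) - 1)"
proof -
  define W where "W = walk_paths d n"
  define p where "p = map_pmf walk_range (walk d n)"
  define m where "m = real (card (steps d))"
  define q where "q = (m - 1) / m"
  define q' where "q' = 1 - 1 / (2 * real d)"
  define c where "c = - log 2 q'"
  define g where "g = (\<lambda>A. real (card (inner_boundary d A)) - 1)"
  have fW: "finite W" and neW: "W \<noteq> {}" using finite_wp wp_ne[OF assms] by (auto simp: W_def)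
  have m2: "m \<ge> 2" using card_steps_ge[OF assms] m_def by simp
  have m2d: "m \<le> 2 * real d" using card_steps_le[of d] m_def by simp
  have q'pos: "q' > 0" and q'1: "q' \<le> 1" using assms by (auto simp: q'_def field_simps)
  have q0: "q \<ge> 0" using m2 q_def by simp
  have qq': "q \<le> q'" using m2 m2d assms unfolding q_def q'_def by (simp add: field_simps)
  have c0: "c \<ge> 0" using q'pos q'1 by (simp add: c_def)
  have setp: "set_pmf p = walk_range ` W"
    by (simp add: p_def walk_def W_def[symmetric] set_pmf_of_set[OF neW fW])
  have fp: "finite (set_pmf p)" using setp fW by simp
  have pmfp: "pmf p A = real (card {xs \<in> W. rng 0 xs = A}) / m ^ n" for A
  proof -
    have "pmf p A = measure (pmf_of_set W) (walk_range -` {A})"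
      by (simp add: p_def walk_def W_def pmf_map)
    also have "\<dots> = real (card (W \<inter> walk_range -` {A})) / real (card W)"
      by (rule measure_pmf_of_set[OF neW fW])
    also have "W \<inter> walk_range -` {A} = {xs \<in> W. rng 0 xs = A}" by (auto simp: walk_range_rng)
    also have "real (card W) = m ^ n" by (simp add: W_def card_wp m_def)
    finally show ?thesis .
  qed
  have tm: "c * g A * pmf p A \<le> - pmf p A * log 2 (pmf p A)" if A: "A \<in> set_pmf p" for A
  proof -
    let ?k = "card (inner_boundary d A) - 1"
    have P0: "pmf p A > 0" using A by (simp add: pmf_positive)
    have P1: "pmf p A \<le> 1" by (rule pmf_le_1)
    have "pmf p A \<le> q ^ ?k"
      using count_bd[OF assms m_def q_def, of n A] m2 unfolding pmfp W_def by (simp add: field_simps)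
    also have "\<dots> \<le> q' ^ ?k" by (rule power_mono[OF qq' q0])
    finally have Pq: "pmf p A \<le> q' ^ ?k" .
    have lg: "c * g A \<le> - log 2 (pmf p A)"
    proof (cases "card (inner_boundary d A) = 0")
      case True
      have "log 2 (pmf p A) \<le> 0" using P0 P1 by simp
      then show ?thesis using True c0 by (simp add: g_def)
    next
      case False
      then have gk: "g A = real ?k" by (simp add: g_def)
      have "log 2 (pmf p A) \<le> log 2 (q' ^ ?k)" using Pq P0 q'pos by simp
      also have "\<dots> = real ?k * log 2 q'" using q'pos by (simp add: log_nat_power)
      finally show ?thesis using gk by (simp add: c_def mult.commute)
    qed
    have "c * g A * pmf p A = pmf p A * (c * g A)" by simp
    also have "\<dots> \<le> pmf p A * (- log 2 (pmf p A))" by (rule mult_left_mono[OF lg]) (use P0 in simp)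
    finally show ?thesis by simp
  qed
  have "measure_pmf.expectation (walk d n) (\<lambda>xs. g (walk_range xs)) = measure_pmf.expectation p g"
    by (simp add: p_def)
  also have "\<dots> = (\<Sum>A\<in>set_pmf p. g A * pmf p A)"
    by (rule integral_measure_pmf_real[OF fp]) auto
  finally have E: "measure_pmf.expectation (walk d n) (\<lambda>xs. g (walk_range xs)) = (\<Sum>A\<in>set_pmf p. g A * pmf p A)" .
  have "c * (\<Sum>A\<in>set_pmf p. g A * pmf p A) = (\<Sum>A\<in>set_pmf p. c * g A * pmf p A)"
    by (simp add: sum_distrib_left mult.assoc)
  also have "\<dots> \<le> (\<Sum>A\<in>set_pmf p. - pmf p A * log 2 (pmf p A))" by (rule sum_mono[OF tm])
  also have "\<dots> = entropy2 p" by (simp add: entropy2_def)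
  finally show ?thesis using E unfolding p_def c_def q'_def g_def by simp
qed

end
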